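(* Let $B$ be a connected finite dimensional symmetric $\Bbbk$-algebra and let $A$ be the trivial extension of $B$ by the $B$-$B$-bimodule $B$. Then the $A$-$A$-bimodule $A\otimes_BA$ is indecomposable; in fact its endomorphism algebra is local.
   Context: $\Bbbk$ is an algebraically closed field. The trivial extension $A$ of $B$ by a $B$-$B$-bimodule $M$ is the algebra of matrices $\begin{pmatrix}b&m\\0&b\end{pmatrix}$, $b\in B$, $m\in M$, with matrix multiplication; here $M=B$ (which is isomorphic to $B^*=\mathrm{Hom}_\Bbbk(B,\Bbbk)$ since $B$ is symmetric). $B$ is regarded as the subalgebra of diagonal matrices. *)

theory Defs
  imports Main "HOL-Computational_Algebra.Polynomial"
begin

definition alg_closed_field :: "'k::field itself \<Rightarrow> bool" where
  "alg_closed_field _ \<longleftrightarrow> (\<forall>p :: 'k poly. degree p \<ge> 1 \<longrightarrow> (\<exists>x. poly p x = 0))"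

definition k_algebra :: "('k::field \<Rightarrow> 'b::ring_1 \<Rightarrow> 'b) \<Rightarrow> bool" where
  "k_algebra sc \<longleftrightarrow> vector_space sc \<and>
     (\<forall>c x y. sc c (x * y) = sc c x * y \<and> sc c (x * y) = x * sc c y)"

definition fin_dim_algebra :: "('k::field \<Rightarrow> 'b::ring_1 \<Rightarrow> 'b) \<Rightarrow> bool" where
  "fin_dim_algebra sc \<longleftrightarrow> k_algebra sc \<and> (\<exists>S. finite S \<and> module.span sc S = UNIV)"

text \<open>Symmetric algebra: there is a k-linear form t with t(xy) = t(yx) whose associated
  bilinear form (x,y) \<mapsto> t(xy) is nondegenerate (equivalently B \<cong> Hom_k(B,k) as bimodules).\<close>
definition symmetric_algebra :: "('k::field \<Rightarrow> 'b::ring_1 \<Rightarrow> 'b) \<Rightarrow> bool" where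
  "symmetric_algebra sc \<longleftrightarrow>
     (\<exists>t :: 'b \<Rightarrow> 'k. Vector_Spaces.linear sc ((*) :: 'k \<Rightarrow> 'k \<Rightarrow> 'k) t \<and>
        (\<forall>x y. t (x * y) = t (y * x)) \<and>
        (\<forall>x. (\<forall>y. t (x * y) = 0) \<longrightarrow> x = 0))"

definition connected_algebra :: "'b::ring_1 itself \<Rightarrow> bool" where
  "connected_algebra _ \<longleftrightarrow> (0::'b) \<noteq> 1 \<and>
     (\<forall>e::'b. e * e = e \<and> (\<forall>x. e * x = x * e) \<longrightarrow> e = 0 \<or> e = 1)"

text \<open>An element (b, m) stands for the matrix [[b, m], [0, b]].\<close>
definition te_add :: "'b::ring_1 \<times> 'b \<Rightarrow> 'b \<times> 'b \<Rightarrow> 'b \<times> 'b" where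
  "te_add x y = (fst x + fst y, snd x + snd y)"

definition te_mul :: "'b::ring_1 \<times> 'b \<Rightarrow> 'b \<times> 'b \<Rightarrow> 'b \<times> 'b" where
  "te_mul x y = (fst x * fst y, fst x * snd y + snd x * fst y)"

definition te_emb :: "'b::ring_1 \<Rightarrow> 'b \<times> 'b" where
  "te_emb b = (b, 0)"

text \<open>Free abelian group on A \<times> A: finitely supported integer-valued functions.\<close>
definition free_grp :: "((('b::ring_1 \<times> 'b) \<times> ('b \<times> 'b)) \<Rightarrow> int) set" where
  "free_grp = {f. finite {p. f p \<noteq> 0}}"

definition gen :: "('b::ring_1 \<times> 'b) \<times> ('b \<times> 'b) \<Rightarrow> (('b \<times> 'b) \<times> ('b \<times> 'b) \<Rightarrow> int)" where
  "gen p = (\<lambda>q. if q = p then 1 else 0)"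

definition fadd :: "('p \<Rightarrow> int) \<Rightarrow> ('p \<Rightarrow> int) \<Rightarrow> ('p \<Rightarrow> int)" where
  "fadd f g = (\<lambda>q. f q + g q)"

definition fsub :: "('p \<Rightarrow> int) \<Rightarrow> ('p \<Rightarrow> int) \<Rightarrow> ('p \<Rightarrow> int)" where
  "fsub f g = (\<lambda>q. f q - g q)"

text \<open>Subgroup of relations: additivity in each argument and B-balancedness.
  A \<otimes>_B A is free_grp modulo tensor_rel.\<close>
inductive_set tensor_rel :: "((('b::ring_1 \<times> 'b) \<times> ('b \<times> 'b)) \<Rightarrow> int) set" where
  zero: "(\<lambda>_. 0) \<in> tensor_rel"
| addl: "fsub (fsub (gen (te_add x x', y)) (gen (x, y))) (gen (x', y)) \<in> tensor_rel"
| addr: "fsub (fsub (gen (x, te_add y y')) (gen (x, y))) (gen (x, y')) \<in> tensor_rel"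
| bal: "fsub (gen (te_mul x (te_emb b), y)) (gen (x, te_mul (te_emb b) y)) \<in> tensor_rel"
| plus: "f \<in> tensor_rel \<Longrightarrow> g \<in> tensor_rel \<Longrightarrow> fadd f g \<in> tensor_rel"
| neg: "f \<in> tensor_rel \<Longrightarrow> (\<lambda>q. - f q) \<in> tensor_rel"

text \<open>Left and right A-actions on generators: a \<cdot> (x \<otimes> y) = (a x) \<otimes> y, (x \<otimes> y) \<cdot> a = x \<otimes> (y a).\<close>
definition lact :: "'b::ring_1 \<times> 'b \<Rightarrow> (('b \<times> 'b) \<times> ('b \<times> 'b) \<Rightarrow> int) \<Rightarrow> (('b \<times> 'b) \<times> ('b \<times> 'b) \<Rightarrow> int)" where
  "lact a f = (\<lambda>p. \<Sum>q\<in>{q. f q \<noteq> 0 \<and> (te_mul a (fst q), snd q) = p}. f q)"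

definition ract :: "(('b::ring_1 \<times> 'b) \<times> ('b \<times> 'b) \<Rightarrow> int) \<Rightarrow> 'b \<times> 'b \<Rightarrow> (('b \<times> 'b) \<times> ('b \<times> 'b) \<Rightarrow> int)" where
  "ract f a = (\<lambda>p. \<Sum>q\<in>{q. f q \<noteq> 0 \<and> (fst q, te_mul (snd q) a) = p}. f q)"

text \<open>A-A-sub-bimodules of A \<otimes>_B A, represented by their preimages in free_grp.\<close>
definition tensor_submod :: "((('b::ring_1 \<times> 'b) \<times> ('b \<times> 'b)) \<Rightarrow> int) set \<Rightarrow> bool" where
  "tensor_submod U \<longleftrightarrow> tensor_rel \<subseteq> U \<and> U \<subseteq> free_grp \<and>
     (\<forall>f\<in>U. \<forall>g\<in>U. fadd f g \<in> U) \<and> (\<forall>f\<in>U. (\<lambda>q. - f q) \<in> U) \<and>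
     (\<forall>a. \<forall>f\<in>U. lact a f \<in> U \<and> ract f a \<in> U)"

definition tensor_indecomposable :: "'b::ring_1 itself \<Rightarrow> bool" where
  "tensor_indecomposable _ \<longleftrightarrow>
     (\<exists>f\<in>(free_grp :: ((('b \<times> 'b) \<times> ('b \<times> 'b)) \<Rightarrow> int) set). f \<notin> tensor_rel) \<and>
     (\<forall>U V :: ((('b \<times> 'b) \<times> ('b \<times> 'b)) \<Rightarrow> int) set.
        tensor_submod U \<and> tensor_submod V \<and> U \<inter> V = tensor_rel \<and>
        (\<forall>f\<in>free_grp. \<exists>u\<in>U. \<exists>v\<in>V. fsub (fsub f u) v \<in> tensor_rel)
        \<longrightarrow> U = tensor_rel \<or> V = tensor_rel)"

text \<open>Endomorphisms of the A-A-bimodule A \<otimes>_B A, given by maps on representatives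
  that preserve the relation subgroup and are additive and A-A-linear modulo it.\<close>
definition tensor_endo :: "((('b::ring_1 \<times> 'b) \<times> ('b \<times> 'b) \<Rightarrow> int) \<Rightarrow> (('b \<times> 'b) \<times> ('b \<times> 'b) \<Rightarrow> int)) \<Rightarrow> bool" where
  "tensor_endo \<phi> \<longleftrightarrow>
     (\<forall>f\<in>free_grp. \<phi> f \<in> free_grp) \<and>
     (\<forall>f\<in>free_grp. \<forall>g\<in>free_grp. fsub f g \<in> tensor_rel \<longrightarrow> fsub (\<phi> f) (\<phi> g) \<in> tensor_rel) \<and>
     (\<forall>f\<in>free_grp. \<forall>g\<in>free_grp. fsub (\<phi> (fadd f g)) (fadd (\<phi> f) (\<phi> g)) \<in> tensor_rel) \<and>
     (\<forall>a. \<forall>f\<in>free_grp. fsub (\<phi> (lact a f)) (lact a (\<phi> f)) \<in> tensor_rel) \<and>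
     (\<forall>a. \<forall>f\<in>free_grp. fsub (\<phi> (ract f a)) (ract (\<phi> f) a) \<in> tensor_rel)"

definition endo_eq :: "((('b::ring_1 \<times> 'b) \<times> ('b \<times> 'b) \<Rightarrow> int) \<Rightarrow> (('b \<times> 'b) \<times> ('b \<times> 'b) \<Rightarrow> int))
    \<Rightarrow> ((('b \<times> 'b) \<times> ('b \<times> 'b) \<Rightarrow> int) \<Rightarrow> (('b \<times> 'b) \<times> ('b \<times> 'b) \<Rightarrow> int)) \<Rightarrow> bool" where
  "endo_eq \<phi> \<psi> \<longleftrightarrow> (\<forall>f\<in>free_grp. fsub (\<phi> f) (\<psi> f) \<in> tensor_rel)"

definition endo_unit :: "((('b::ring_1 \<times> 'b) \<times> ('b \<times> 'b) \<Rightarrow> int) \<Rightarrow> (('b \<times> 'b) \<times> ('b \<times> 'b) \<Rightarrow> int)) \<Rightarrow> bool" where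
  "endo_unit \<phi> \<longleftrightarrow> (\<exists>\<chi>. tensor_endo \<chi> \<and> endo_eq (\<chi> \<circ> \<phi>) id \<and> endo_eq (\<phi> \<circ> \<chi>) id)"

definition tensor_end_local :: "'b::ring_1 itself \<Rightarrow> bool" where
  "tensor_end_local _ \<longleftrightarrow>
     \<not> endo_eq (id :: (('b \<times> 'b) \<times> ('b \<times> 'b) \<Rightarrow> int) \<Rightarrow> _) (\<lambda>f. (\<lambda>_. 0)) \<and>
     (\<forall>\<phi> \<psi> :: (('b \<times> 'b) \<times> ('b \<times> 'b) \<Rightarrow> int) \<Rightarrow> (('b \<times> 'b) \<times> ('b \<times> 'b) \<Rightarrow> int).
        tensor_endo \<phi> \<and> tensor_endo \<psi> \<and> \<not> endo_unit \<phi> \<and> \<not> endo_unit \<psi>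
        \<longrightarrow> \<not> endo_unit (\<lambda>f. fadd (\<phi> f) (\<psi> f)))"

end

theory Submission
  imports Defs
begin



definition central :: "'b::ring_1 \<Rightarrow> bool" where
  "central c \<longleftrightarrow> (\<forall>y. c * y = y * c)"

lemma central_comm: "central c \<Longrightarrow> c * y = y * c"
  by (simp add: central_def)
lemma central_mult: "central a \<Longrightarrow> central b \<Longrightarrow> central (a * b)"
  unfolding central_def by (metis mult.assoc)
lemma central_add: "central a \<Longrightarrow> central b \<Longrightarrow> central (a + b)"
  unfolding central_def by (simp add: distrib_left distrib_right)
lemma central_uminus: "central a \<Longrightarrow> central (- a)"
  unfolding central_def by simp
lemma central_diff: "central a \<Longrightarrow> central b \<Longrightarrow> central (a - b)"
  unfolding central_def by (simp add: left_diff_distrib right_diff_distrib)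
lemma central_one[simp]: "central 1" and central_zero[simp]: "central 0"
  unfolding central_def by simp_all
lemma central_power: "central a \<Longrightarrow> central (a ^ n)"
  by (induction n) (auto intro: central_mult)
lemma central_inverse: "central p \<Longrightarrow> i * p = 1 \<Longrightarrow> p * i = 1 \<Longrightarrow> central i"
  unfolding central_def by (metis mult.assoc mult_1_left mult_1_right)

lemma fitting:
  fixes sc :: "'k::field \<Rightarrow> 'b::ring_1 \<Rightarrow> 'b"
    and x :: 'b
  assumes fd: "fin_dim_algebra sc" and conn: "connected_algebra TYPE('b)"
    and cx: "central x"
  shows "(\<exists>y. x * y = 1 \<and> y * x = 1) \<or> (\<exists>n. x ^ n = 0)"
proof -
  have ka: "k_algebra sc" and fS: "\<exists>S. finite S \<and> module.span sc S = UNIV"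
    using fd unfolding fin_dim_algebra_def by auto
  have vs: "vector_space sc" using ka unfolding k_algebra_def by auto
  interpret vector_space sc by (rule vs)
  obtain S where S: "finite S" "span S = UNIV" using fS by auto
  obtain B where B: "independent B" "UNIV \<subseteq> span B"
    using basis_exists[of UNIV] by metis
  have fB: "finite B" using independent_span_bound[OF S(1) B(1)] S(2) by auto
  interpret fd: finite_dimensional_vector_space sc B
    by unfold_locales (use fB B in auto)
  have scm: "\<And>c a b. sc c (a * b) = a * sc c b" using ka unfolding k_algebra_def by metis
  have scm1: "\<And>c a b. sc c (a * b) = sc c a * b" using ka unfolding k_algebra_def by metis
  have scc: "central (sc c y)" if "central y" for c y
  proof -
    have "sc c y = sc c 1 * y" using scm1[of c 1 y] by simp
    moreover have "central (sc c 1)" unfolding central_def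
      by (metis mult_1_left mult_1_right scm scm1)
    ultimately show ?thesis using that central_mult by metis
  qed
  define I where "I n = (\<lambda>c. x ^ n * c) ` {c. central c}" for n
  have sub: "subspace (I n)" for n
    unfolding subspace_def I_def
  proof (intro conjI ballI allI)
    show "0 \<in> (\<lambda>c. x ^ n * c) ` {c. central c}" by (rule image_eqI[of _ _ 0]) auto
  next
    fix a b assume "a \<in> (\<lambda>c. x ^ n * c) ` {c. central c}" "b \<in> (\<lambda>c. x ^ n * c) ` {c. central c}"
    then obtain c d where "central c" "central d" "a = x^n * c" "b = x^n*d" by auto
    then show "a + b \<in> (\<lambda>c. x ^ n * c) ` {c. central c}"
      by (intro image_eqI[of _ _ "c + d"]) (auto simp: distrib_left intro: central_add)
  next
    fix k a assume "a \<in> (\<lambda>c. x ^ n * c) ` {c. central c}"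
    then obtain c where "central c" "a = x^n * c" by auto
    then show "sc k a \<in> (\<lambda>c. x ^ n * c) ` {c. central c}"
      by (intro image_eqI[of _ _ "sc k c"]) (auto simp: scm scc)
  qed
  have mono: "I (Suc n) \<subseteq> I n" for n
  proof
    fix a assume "a \<in> I (Suc n)"
    then obtain c where "central c" "a = x^Suc n * c" unfolding I_def by auto
    then show "a \<in> I n" unfolding I_def
      by (intro image_eqI[of _ _ "x * c"]) (auto simp del: power_Suc simp: power_Suc2 mult.assoc intro: central_mult cx)
  qed
  obtain n where nmin: "\<And>m. dim (I n) \<le> dim (I m)"
    using ex_has_least_nat[of "\<lambda>_. True" _ "\<lambda>m. dim (I m)"] by blast
  have eq: "I (Suc n) = I n"
    using fd.subspace_dim_equal[OF sub sub mono nmin] .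
  have "x ^ n \<in> I n" unfolding I_def by (intro image_eqI[of _ _ 1]) auto
  then have "x ^ n \<in> I (Suc n)" using eq by simp
  then obtain y where cy: "central y" and xy: "x ^ n = x ^ Suc n * y"
    unfolding I_def by blast
  show ?thesis
  proof (cases n)
    case 0
    then have "x * y = 1" using xy by simp
    then show ?thesis using central_comm[OF cx] by metis
  next
    case (Suc m)
    have gen: "x ^ n = x ^ (n + k) * y ^ k" for k
    proof (induction k)
      case 0 then show ?case by simp
    next
      case (Suc k)
      have "x ^ (n + k) * y ^ k = x ^ k * x ^ n * y ^ k" by (simp add: power_add mult.commute[of n] algebra_simps)
      also have "\<dots> = x ^ k * (x ^ Suc n * y) * y ^ k" using xy by simp
      also have "\<dots> = x ^ (n + Suc k) * (y * y ^ k)"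
        by (simp add: power_add mult.assoc power_Suc2)
           (metis central_comm[OF central_power[OF cx]] mult.assoc power_add power_commutes)
      finally show ?case using Suc by (simp add: power_Suc)
    qed
    define e where "e = x ^ n * y ^ n"
    have ce: "central e" unfolding e_def by (intro central_mult central_power cx cy)
    have xe: "x ^ n = x ^ n * e" using gen[of n] unfolding e_def by (simp add: power_add mult.assoc)
    have ee: "e * e = e"
    proof -
      have "e * e = x ^ n * (y ^ n * x ^ n) * y ^ n" unfolding e_def by (simp add: mult.assoc)
      also have "\<dots> = x ^ n * (x ^ n * y ^ n) * y ^ n"
        using central_comm[OF central_power[OF cy], of n "x^n"] by simp
      also have "\<dots> = x ^ n * y ^ n" using gen[of n] by (simp add: power_add mult.assoc)
      finally show ?thesis unfolding e_def .
    qed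
    have "e = 0 \<or> e = 1" using conn ce ee unfolding connected_algebra_def central_def by metis
    then show ?thesis
    proof
      assume "e = 0" then have "x ^ n = 0" using xe by simp
      then show ?thesis by blast
    next
      assume "e = 1"
      then have "x * (x ^ m * y ^ n) = 1" unfolding e_def Suc by (simp add: mult.assoc)
      moreover have "central (x ^ m * y ^ n)" by (intro central_mult central_power cx cy)
      ultimately show ?thesis using central_comm by metis
    qed
  qed
qed




datatype 'b q4 = Q 'b 'b 'b 'b

instantiation q4 :: (ab_group_add) ab_group_add
begin
fun plus_q4 :: "'a q4 \<Rightarrow> 'a q4 \<Rightarrow> 'a q4" where
  "plus_q4 (Q a b c d) (Q a' b' c' d') = Q (a + a') (b + b') (c + c') (d + d')"
fun minus_q4 :: "'a q4 \<Rightarrow> 'a q4 \<Rightarrow> 'a q4" where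
  "minus_q4 (Q a b c d) (Q a' b' c' d') = Q (a - a') (b - b') (c - c') (d - d')"
fun uminus_q4 :: "'a q4 \<Rightarrow> 'a q4" where
  "uminus_q4 (Q a b c d) = Q (- a) (- b) (- c) (- d)"
definition zero_q4 :: "'a q4" where "zero_q4 = Q 0 0 0 0"
instance
proof
  fix x y z :: "'a q4"
  show "x + y + z = x + (y + z)" by (cases x; cases y; cases z) (simp add: add.assoc)
  show "x + y = y + x" by (cases x; cases y) (simp add: add.commute)
  show "0 + x = x" by (cases x) (simp add: zero_q4_def)
  show "- x + x = 0" by (cases x) (simp add: zero_q4_def)
  show "x - y = x + - y" by (cases x; cases y) simp
qed
end

lemma zero_Q: "0 = Q 0 0 0 0" by (simp add: zero_q4_def)

definition supp :: "('p \<Rightarrow> int) \<Rightarrow> 'p set" where "supp f = {p. f p \<noteq> 0}"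

lemma free_grp_iff: "f \<in> free_grp \<longleftrightarrow> finite (supp f)"
  by (simp add: free_grp_def supp_def)

lemma supp_gen: "supp (gen p) = {p}" by (auto simp: supp_def gen_def)
lemma gen_free[simp]: "gen p \<in> free_grp" by (simp add: free_grp_iff supp_gen)
lemma zero_free[simp]: "(\<lambda>_. 0) \<in> free_grp" by (simp add: free_grp_def)
lemma fadd_free[simp]: "f \<in> free_grp \<Longrightarrow> g \<in> free_grp \<Longrightarrow> fadd f g \<in> free_grp"
  unfolding free_grp_iff supp_def fadd_def
  by (rule finite_subset[of _ "{p. f p \<noteq> 0} \<union> {p. g p \<noteq> 0}"]) auto
lemma fsub_free[simp]: "f \<in> free_grp \<Longrightarrow> g \<in> free_grp \<Longrightarrow> fsub f g \<in> free_grp"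
  unfolding free_grp_iff supp_def fsub_def
  by (rule finite_subset[of _ "{p. f p \<noteq> 0} \<union> {p. g p \<noteq> 0}"]) auto
lemma neg_free[simp]: "f \<in> free_grp \<Longrightarrow> (\<lambda>q. - f q) \<in> free_grp"
  unfolding free_grp_iff supp_def by simp

lemma rel_free: "f \<in> tensor_rel \<Longrightarrow> f \<in> free_grp"
proof (induction rule: tensor_rel.induct)
  case zero then show ?case by (rule zero_free)
next
  case (addl x x' y) then show ?case by (intro fsub_free gen_free)
next
  case (addr x y y') then show ?case by (intro fsub_free gen_free)
next
  case (bal x b y) then show ?case by (intro fsub_free gen_free)
next
  case (plus f g) then show ?case by (intro fadd_free)
next
  case (neg f) then show ?case by (intro neg_free)
qed

lemma push_supp:
  assumes F: "\<And>p. F p = (\<Sum>q\<in>{q. f q \<noteq> 0 \<and> g q = p}. f q)"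
  shows "supp F \<subseteq> g ` supp f"
proof
  fix p assume "p \<in> supp F"
  then have "{q. f q \<noteq> 0 \<and> g q = p} \<noteq> {}" unfolding supp_def F by force
  then show "p \<in> g ` supp f" unfolding supp_def by blast
qed

lemma lact_supp: "supp (lact a f) \<subseteq> (\<lambda>q. (te_mul a (fst q), snd q)) ` supp f"
  by (rule push_supp) (simp add: lact_def)
lemma ract_supp: "supp (ract f a) \<subseteq> (\<lambda>q. (fst q, te_mul (snd q) a)) ` supp f"
  by (rule push_supp) (simp add: ract_def)

lemma lact_free[simp]: "f \<in> free_grp \<Longrightarrow> lact a f \<in> free_grp"
  unfolding free_grp_iff using lact_supp finite_subset by blast
lemma ract_free[simp]: "f \<in> free_grp \<Longrightarrow> ract f a \<in> free_grp"
  unfolding free_grp_iff using ract_supp finite_subset by blast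

section \<open>Linear lifting\<close>

definition L :: "('p \<Rightarrow> 'b::ring_1) \<Rightarrow> ('p \<Rightarrow> int) \<Rightarrow> 'b" where
  "L h f = (\<Sum>p\<in>supp f. of_int (f p) * h p)"

lemma L_sum: "finite S \<Longrightarrow> supp f \<subseteq> S \<Longrightarrow> L h f = (\<Sum>p\<in>S. of_int (f p) * h p)"
  unfolding L_def by (rule sum.mono_neutral_left) (auto simp: supp_def)

lemma L_fadd: assumes "f \<in> free_grp" "g \<in> free_grp" shows "L h (fadd f g) = L h f + L h g"
proof -
  let ?S = "supp f \<union> supp g"
  have fS: "finite ?S" using assms by (simp add: free_grp_iff)
  have sS: "supp (fadd f g) \<subseteq> ?S" by (auto simp: supp_def fadd_def)
  have "L h (fadd f g) = (\<Sum>p\<in>?S. of_int (fadd f g p) * h p)" by (rule L_sum[OF fS sS])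
  also have "\<dots> = (\<Sum>p\<in>?S. of_int (f p) * h p) + (\<Sum>p\<in>?S. of_int (g p) * h p)"
    by (simp add: fadd_def distrib_right sum.distrib)
  also have "\<dots> = L h f + L h g" using L_sum[OF fS, of f h] L_sum[OF fS, of g h] by auto
  finally show ?thesis .
qed

lemma L_fsub: assumes "f \<in> free_grp" "g \<in> free_grp" shows "L h (fsub f g) = L h f - L h g"
proof -
  let ?S = "supp f \<union> supp g"
  have fS: "finite ?S" using assms by (simp add: free_grp_iff)
  have sS: "supp (fsub f g) \<subseteq> ?S" by (auto simp: supp_def fsub_def)
  have "L h (fsub f g) = (\<Sum>p\<in>?S. of_int (fsub f g p) * h p)" by (rule L_sum[OF fS sS])
  also have "\<dots> = (\<Sum>p\<in>?S. of_int (f p) * h p) - (\<Sum>p\<in>?S. of_int (g p) * h p)"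
    by (simp add: fsub_def left_diff_distrib sum_subtractf)
  also have "\<dots> = L h f - L h g" using L_sum[OF fS, of f h] L_sum[OF fS, of g h] by auto
  finally show ?thesis .
qed

lemma L_neg: "L h (\<lambda>q. - f q) = - L h f"
  by (simp add: L_def supp_def sum_negf)

lemma L_gen[simp]: "L h (gen p) = h p"
  unfolding L_def supp_gen by (simp add: gen_def)

lemma L_zero[simp]: "L h (\<lambda>_. 0) = 0"
  by (simp add: L_def supp_def)

lemma L_lmult: "L (\<lambda>q. c * h q) f = c * L h f"
proof -
  have e: "of_int k * (c * x) = c * (of_int k * x)" for k and x
  proof -
    have "of_int k * (c * x) = (of_int k * c) * x" by (simp add: mult.assoc)
    also have "\<dots> = (c * of_int k) * x" by (simp add: mult_of_int_commute)
    finally show ?thesis by (simp add: mult.assoc)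
  qed
  show ?thesis unfolding L_def sum_distrib_left by (rule sum.cong) (simp_all add: e)
qed
lemma L_rmult: "L (\<lambda>q. h q * c) f = L h f * c"
  by (simp add: L_def sum_distrib_right mult.assoc)
lemma L_plus: "L (\<lambda>q. h q + k q) f = L h f + L k f"
  by (simp add: L_def distrib_left sum.distrib)




lemma L_push:
  fixes g :: "'p \<Rightarrow> 'q"
  assumes fS: "finite (supp f)"
    and F: "\<And>p. F p = (\<Sum>q\<in>{q. f q \<noteq> 0 \<and> g q = p}. f q)"
  shows "L h F = L (\<lambda>q. h (g q)) f"
proof -
  have sF: "supp F \<subseteq> g ` supp f" by (rule push_supp) (rule F)
  have "L h F = (\<Sum>p\<in>g ` supp f. of_int (F p) * h p)"
    by (rule L_sum) (simp_all add: fS sF)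
  also have "\<dots> = (\<Sum>p\<in>g ` supp f. (\<Sum>q\<in>{q \<in> supp f. g q = p}. of_int (f q) * h (g q)))"
  proof (rule sum.cong[OF refl])
    fix p
    have e: "{q. f q \<noteq> 0 \<and> g q = p} = {q \<in> supp f. g q = p}" by (auto simp: supp_def)
    have "of_int (F p) * h p = (\<Sum>q\<in>{q \<in> supp f. g q = p}. of_int (f q) * h p)"
      unfolding F e by (simp add: sum_distrib_right)
    also have "\<dots> = (\<Sum>q\<in>{q \<in> supp f. g q = p}. of_int (f q) * h (g q))"
      by (rule sum.cong) auto
    finally show "of_int (F p) * h p = (\<Sum>q\<in>{q \<in> supp f. g q = p}. of_int (f q) * h (g q))" .
  qed
  also have "\<dots> = (\<Sum>q\<in>supp f. of_int (f q) * h (g q))"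
    using sum.image_gen[OF fS, of "\<lambda>q. of_int (f q) * h (g q)" g] by simp
  also have "\<dots> = L (\<lambda>q. h (g q)) f" by (simp add: L_def)
  finally show ?thesis .
qed

lemma L_lact: assumes "f \<in> free_grp"
  shows "L h (lact a f) = L (\<lambda>q. h (te_mul a (fst q), snd q)) f"
  by (rule L_push) (use assms in \<open>simp_all add: free_grp_iff lact_def\<close>)

lemma L_ract: assumes "f \<in> free_grp"
  shows "L h (ract f a) = L (\<lambda>q. h (fst q, te_mul (snd q) a)) f"
  by (rule L_push) (use assms in \<open>simp_all add: free_grp_iff ract_def\<close>)

lemma L_rel:
  fixes h :: "('b::ring_1 \<times> 'b) \<times> ('b \<times> 'b) \<Rightarrow> 'b"
  assumes al: "\<And>x x' y. h (te_add x x', y) = h (x, y) + h (x', y)"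
    and ar: "\<And>x y y'. h (x, te_add y y') = h (x, y) + h (x, y')"
    and bl: "\<And>x y b. h (te_mul x (te_emb b), y) = h (x, te_mul (te_emb b) y)"
    and f: "f \<in> tensor_rel"
  shows "L h f = 0"
  using f
proof (induction rule: tensor_rel.induct)
  case zero then show ?case by simp
next
  case (addl x x' y) then show ?case by (simp add: L_fsub al)
next
  case (addr x y y') then show ?case by (simp add: L_fsub ar)
next
  case (bal x b y) then show ?case by (simp add: L_fsub bl)
next
  case (plus f g) then show ?case by (simp add: L_fadd rel_free)
next
  case (neg f) then show ?case by (simp add: L_neg)
qed




definition h1 :: "('b::ring_1 \<times> 'b) \<times> ('b \<times> 'b) \<Rightarrow> 'b" where "h1 p = fst (fst p) * fst (snd p)"
definition h2 :: "('b::ring_1 \<times> 'b) \<times> ('b \<times> 'b) \<Rightarrow> 'b" where "h2 p = fst (fst p) * snd (snd p)"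
definition h3 :: "('b::ring_1 \<times> 'b) \<times> ('b \<times> 'b) \<Rightarrow> 'b" where "h3 p = snd (fst p) * fst (snd p)"
definition h4 :: "('b::ring_1 \<times> 'b) \<times> ('b \<times> 'b) \<Rightarrow> 'b" where "h4 p = snd (fst p) * snd (snd p)"

definition Phi :: "((('b::ring_1 \<times> 'b) \<times> ('b \<times> 'b)) \<Rightarrow> int) \<Rightarrow> 'b q4" where
  "Phi f = Q (L h1 f) (L h2 f) (L h3 f) (L h4 f)"

definition ev :: "('b::ring_1 \<times> 'b) \<times> ('b \<times> 'b) \<Rightarrow> 'b q4" where
  "ev p = Q (h1 p) (h2 p) (h3 p) (h4 p)"

fun lA :: "'b::ring_1 \<times> 'b \<Rightarrow> 'b q4 \<Rightarrow> 'b q4" where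
  "lA a (Q y1 y2 y3 y4) = Q (fst a * y1) (fst a * y2) (fst a * y3 + snd a * y1) (fst a * y4 + snd a * y2)"
fun rA :: "'b::ring_1 q4 \<Rightarrow> 'b \<times> 'b \<Rightarrow> 'b q4" where
  "rA (Q y1 y2 y3 y4) a = Q (y1 * fst a) (y1 * snd a + y2 * fst a) (y3 * fst a) (y3 * snd a + y4 * fst a)"

definition psi :: "'b::ring_1 q4 \<Rightarrow> ((('b \<times> 'b) \<times> ('b \<times> 'b)) \<Rightarrow> int)" where
  "psi X = (case X of Q p q r s \<Rightarrow> fadd (gen ((1,0),(p,q))) (gen ((0,1),(r,s))))"

lemma Phi_fadd: "f \<in> free_grp \<Longrightarrow> g \<in> free_grp \<Longrightarrow> Phi (fadd f g) = Phi f + Phi g"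
  by (simp add: Phi_def L_fadd)
lemma Phi_fsub: "f \<in> free_grp \<Longrightarrow> g \<in> free_grp \<Longrightarrow> Phi (fsub f g) = Phi f - Phi g"
  by (simp add: Phi_def L_fsub)
lemma Phi_neg: "Phi (\<lambda>q. - f q) = - Phi f"
  by (simp add: Phi_def L_neg)
lemma Phi_gen: "Phi (gen p) = ev p"
  by (simp add: Phi_def ev_def)
lemma Phi_zero: "Phi (\<lambda>_. 0) = 0"
  by (simp add: Phi_def zero_Q)

lemma Phi_rel: assumes "f \<in> tensor_rel" shows "Phi f = 0"
proof -
  have "L h1 f = 0" by (rule L_rel[OF _ _ _ assms]) (auto simp: h1_def te_add_def te_mul_def te_emb_def algebra_simps)
  moreover have "L h2 f = 0" by (rule L_rel[OF _ _ _ assms]) (auto simp: h2_def te_add_def te_mul_def te_emb_def algebra_simps)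
  moreover have "L h3 f = 0" by (rule L_rel[OF _ _ _ assms]) (auto simp: h3_def te_add_def te_mul_def te_emb_def algebra_simps)
  moreover have "L h4 f = 0" by (rule L_rel[OF _ _ _ assms]) (auto simp: h4_def te_add_def te_mul_def te_emb_def algebra_simps)
  ultimately show ?thesis by (simp add: Phi_def zero_Q)
qed

lemma Phi_lact: assumes "f \<in> free_grp" shows "Phi (lact a f) = lA a (Phi f)"
proof -
  have e1: "(\<lambda>q. h1 (te_mul a (fst q), snd q)) = (\<lambda>q. fst a * h1 q)"
    by (rule ext) (simp add: h1_def te_mul_def mult.assoc)
  have e2: "(\<lambda>q. h2 (te_mul a (fst q), snd q)) = (\<lambda>q. fst a * h2 q)"
    by (rule ext) (simp add: h2_def te_mul_def mult.assoc)
  have e3: "(\<lambda>q. h3 (te_mul a (fst q), snd q)) = (\<lambda>q. fst a * h3 q + snd a * h1 q)"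
    by (rule ext) (simp add: h1_def h3_def te_mul_def mult.assoc distrib_right)
  have e4: "(\<lambda>q. h4 (te_mul a (fst q), snd q)) = (\<lambda>q. fst a * h4 q + snd a * h2 q)"
    by (rule ext) (simp add: h2_def h4_def te_mul_def mult.assoc distrib_right)
  show ?thesis
    by (simp add: Phi_def L_lact[OF assms] e1 e2 e3 e4 L_plus L_lmult)
qed

lemma Phi_ract: assumes "f \<in> free_grp" shows "Phi (ract f a) = rA (Phi f) a"
proof -
  have e1: "(\<lambda>q. h1 (fst q, te_mul (snd q) a)) = (\<lambda>q. h1 q * fst a)"
    by (rule ext) (simp add: h1_def te_mul_def mult.assoc)
  have e2: "(\<lambda>q. h2 (fst q, te_mul (snd q) a)) = (\<lambda>q. h1 q * snd a + h2 q * fst a)"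
    by (rule ext) (simp add: h1_def h2_def te_mul_def mult.assoc distrib_left)
  have e3: "(\<lambda>q. h3 (fst q, te_mul (snd q) a)) = (\<lambda>q. h3 q * fst a)"
    by (rule ext) (simp add: h3_def te_mul_def mult.assoc)
  have e4: "(\<lambda>q. h4 (fst q, te_mul (snd q) a)) = (\<lambda>q. h3 q * snd a + h4 q * fst a)"
    by (rule ext) (simp add: h3_def h4_def te_mul_def mult.assoc distrib_left)
  show ?thesis
    by (simp add: Phi_def L_ract[OF assms] e1 e2 e3 e4 L_plus L_rmult)
qed

lemma psi_free[simp]: "psi X \<in> free_grp"
  by (cases X) (simp add: psi_def)

lemma Phi_psi: "Phi (psi X) = X"
  by (cases X) (simp add: psi_def Phi_fadd Phi_gen ev_def h1_def h2_def h3_def h4_def)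

lemma rel_fsub: "f \<in> tensor_rel \<Longrightarrow> g \<in> tensor_rel \<Longrightarrow> fsub f g \<in> tensor_rel"
proof -
  assume "f \<in> tensor_rel" "g \<in> tensor_rel"
  then have "fadd f (\<lambda>q. - g q) \<in> tensor_rel" by (intro tensor_rel.plus tensor_rel.neg)
  moreover have "fadd f (\<lambda>q. - g q) = fsub f g" by (simp add: fadd_def fsub_def fun_eq_iff)
  ultimately show ?thesis by simp
qed

lemma free_induct[consumes 1, case_names zero add sub]:
  assumes f: "f \<in> free_grp" and z: "P (\<lambda>_. 0)"
    and a: "\<And>f p. f \<in> free_grp \<Longrightarrow> P f \<Longrightarrow> P (fadd f (gen p))"
    and s: "\<And>f p. f \<in> free_grp \<Longrightarrow> P f \<Longrightarrow> P (fsub f (gen p))"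
  shows "P f"
proof -
  have main: "\<forall>f. supp f \<subseteq> S \<longrightarrow> P f" if "finite S" for S
    using that
  proof (induction S rule: finite_induct)
    case empty
    { fix f :: "('a \<times> 'a) \<times> ('a \<times> 'a) \<Rightarrow> int" assume "supp f \<subseteq> {}"
      then have "f = (\<lambda>_. 0)" by (auto simp: supp_def fun_eq_iff) }
    then show ?case using z by auto
  next
    case (insert p S)
    show ?case
    proof (intro allI impI)
      fix f :: "('a \<times> 'a) \<times> ('a \<times> 'a) \<Rightarrow> int" assume sf: "supp f \<subseteq> insert p S"
      let ?f0 = "f(p := 0)"
      have s0: "supp ?f0 \<subseteq> S" using sf by (auto simp: supp_def)
      have P0: "P ?f0" using insert.IH s0 by blast
      have fr: "?f0(p := k) \<in> free_grp" for k
      proof -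
        have "supp (?f0(p := k)) \<subseteq> insert p (supp ?f0)" by (auto simp: supp_def)
        then have "supp (?f0(p := k)) \<subseteq> insert p S" using s0 by blast
        then show ?thesis unfolding free_grp_iff using insert.hyps(1) finite_subset by blast
      qed
      have Pk: "P (?f0(p := k))" for k :: int
      proof (induct k rule: int_induct[of _ 0])
        case base then show ?case using P0 by (simp only: fun_upd_upd)
      next
        case (step1 i)
        have eq: "?f0(p := i + 1) = fadd (?f0(p := i)) (gen p)" by (auto simp: fun_eq_iff fadd_def gen_def)
        from a[OF fr step1(2), of p] show ?case unfolding eq .
      next
        case (step2 i)
        have eq: "?f0(p := i - 1) = fsub (?f0(p := i)) (gen p)" by (auto simp: fun_eq_iff fsub_def gen_def)
        from s[OF fr step2(2), of p] show ?case unfolding eq .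
      qed
      have eq: "?f0(p := f p) = f" by simp
      from Pk[of "f p"] show "P f" unfolding eq .
    qed
  qed
  show ?thesis using main[of "supp f"] f by (simp add: free_grp_iff)
qed




lemma rel_cong: "f \<in> tensor_rel \<Longrightarrow> f = g \<Longrightarrow> g \<in> tensor_rel" by simp

lemma gen_psi: "fsub (gen p) (psi (ev p)) \<in> tensor_rel"
proof -
  obtain a m y where p: "p = ((a, m), y)" by (metis prod.collapse)
  obtain c n where y: "y = (c, n)" by (metis prod.collapse)
  have r1: "fsub (fsub (gen ((a, m), y)) (gen ((a, 0), y))) (gen ((0, m), y)) \<in> tensor_rel"
    using tensor_rel.addl[of "(a,0)" "(0,m)" y] by (simp add: te_add_def)
  have r2: "fsub (gen ((a, 0), y)) (gen ((1, 0), (a * c, a * n))) \<in> tensor_rel"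
    using tensor_rel.bal[of "(1,0)" a y] by (simp add: te_mul_def te_emb_def y)
  have r3: "fsub (gen ((0, m), y)) (gen ((0, 1), (m * c, m * n))) \<in> tensor_rel"
    using tensor_rel.bal[of "(0,1)" m y] by (simp add: te_mul_def te_emb_def y)
  have "fadd (fadd (fsub (fsub (gen ((a, m), y)) (gen ((a, 0), y))) (gen ((0, m), y)))
         (fsub (gen ((a, 0), y)) (gen ((1, 0), (a * c, a * n)))))
         (fsub (gen ((0, m), y)) (gen ((0, 1), (m * c, m * n)))) = fsub (gen p) (psi (ev p))"
    by (simp add: p y psi_def ev_def h1_def h2_def h3_def h4_def fun_eq_iff fadd_def fsub_def)
  then show ?thesis using r1 r2 r3 by (metis tensor_rel.plus)
qed

lemma psi_add: "fsub (fsub (psi (X + Y)) (psi X)) (psi Y) \<in> tensor_rel"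
proof -
  obtain p q r s where X: "X = Q p q r s" by (cases X)
  obtain p' q' r' s' where Y: "Y = Q p' q' r' s'" by (cases Y)
  have r1: "fsub (fsub (gen ((1,0), (p + p', q + q'))) (gen ((1,0), (p, q)))) (gen ((1,0), (p', q'))) \<in> tensor_rel"
    using tensor_rel.addr[of "(1,0)" "(p,q)" "(p',q')"] by (simp add: te_add_def)
  have r2: "fsub (fsub (gen ((0,1), (r + r', s + s'))) (gen ((0,1), (r, s)))) (gen ((0,1), (r', s'))) \<in> tensor_rel"
    using tensor_rel.addr[of "(0,1)" "(r,s)" "(r',s')"] by (simp add: te_add_def)
  have "fadd (fsub (fsub (gen ((1,0), (p + p', q + q'))) (gen ((1,0), (p, q)))) (gen ((1,0), (p', q'))))
     (fsub (fsub (gen ((0,1), (r + r', s + s'))) (gen ((0,1), (r, s)))) (gen ((0,1), (r', s'))))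
     = fsub (fsub (psi (X + Y)) (psi X)) (psi Y)"
    by (simp add: X Y psi_def fun_eq_iff fadd_def fsub_def)
  then show ?thesis using r1 r2 by (metis tensor_rel.plus)
qed

lemma psi_zero: "psi (0::'b::ring_1 q4) \<in> tensor_rel"
proof -
  have "fsub (fsub (psi (0 + 0)) (psi 0)) (psi 0) \<in> tensor_rel" by (rule psi_add)
  then have "(\<lambda>q. - fsub (fsub (psi (0 + 0)) (psi 0)) (psi 0) q) \<in> tensor_rel" by (rule tensor_rel.neg)
  moreover have "(\<lambda>q. - fsub (fsub (psi (0 + 0)) (psi 0)) (psi 0) q) = psi (0::'b q4)"
    by (simp add: fun_eq_iff fsub_def)
  ultimately show ?thesis by (rule rel_cong)
qed

lemma free_psi_Phi: "f \<in> free_grp \<Longrightarrow> fsub f (psi (Phi f)) \<in> tensor_rel"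
proof (induction f rule: free_induct)
  case zero
  have "(\<lambda>q. - psi 0 q) \<in> tensor_rel" using psi_zero by (rule tensor_rel.neg)
  moreover have "(\<lambda>q. - psi 0 q) = fsub (\<lambda>_. 0) (psi (Phi (\<lambda>_. 0::int)))"
    by (simp add: Phi_zero fun_eq_iff fsub_def)
  ultimately show ?case by (rule rel_cong)
next
  case (add f p)
  have A: "fsub (gen p) (psi (ev p)) \<in> tensor_rel" by (rule gen_psi)
  have B: "fsub (fsub (psi (Phi f + ev p)) (psi (Phi f))) (psi (ev p)) \<in> tensor_rel" by (rule psi_add)
  have "fsub (fadd (fsub f (psi (Phi f))) (fsub (gen p) (psi (ev p))))
     (fsub (fsub (psi (Phi f + ev p)) (psi (Phi f))) (psi (ev p)))
     = fsub (fadd f (gen p)) (psi (Phi (fadd f (gen p))))"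
  proof -
    have P: "Phi (fadd f (gen p)) = Phi f + ev p" using add by (simp add: Phi_fadd Phi_gen)
    show ?thesis unfolding P by (simp add: fun_eq_iff fadd_def fsub_def)
  qed
  then show ?case using add A B by (metis tensor_rel.plus rel_fsub)
next
  case (sub f p)
  have A: "fsub (gen p) (psi (ev p)) \<in> tensor_rel" by (rule gen_psi)
  have B: "fsub (fsub (psi (Phi f - ev p + ev p)) (psi (Phi f - ev p))) (psi (ev p)) \<in> tensor_rel" by (rule psi_add)
  have "fadd (fsub (fsub f (psi (Phi f))) (fsub (gen p) (psi (ev p))))
     (fsub (fsub (psi (Phi f - ev p + ev p)) (psi (Phi f - ev p))) (psi (ev p)))
     = fsub (fsub f (gen p)) (psi (Phi (fsub f (gen p))))"
  proof -
    have P: "Phi (fsub f (gen p)) = Phi f - ev p" using sub by (simp add: Phi_fsub Phi_gen)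
    show ?thesis unfolding P by (simp add: fun_eq_iff fadd_def fsub_def)
  qed
  then show ?case using sub A B by (metis tensor_rel.plus rel_fsub)
qed

lemma kernel: assumes "f \<in> free_grp" "Phi f = 0" shows "f \<in> tensor_rel"
proof -
  have "fadd (fsub f (psi (Phi f))) (psi 0) = f" using assms(2) by (simp add: fun_eq_iff fadd_def fsub_def)
  then show ?thesis using free_psi_Phi[OF assms(1)] psi_zero by (metis tensor_rel.plus)
qed

lemma eqv_iff: "f \<in> free_grp \<Longrightarrow> g \<in> free_grp \<Longrightarrow> fsub f g \<in> tensor_rel \<longleftrightarrow> Phi f = Phi g"
  using Phi_rel[of "fsub f g"] kernel[of "fsub f g"] by (auto simp: Phi_fsub)




definition g0 :: "(('b::ring_1 \<times> 'b) \<times> ('b \<times> 'b)) \<Rightarrow> int" where "g0 = gen ((1,0),(1,0))"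
definition eps :: "'b::ring_1 \<times> 'b" where "eps = (0, 1)"

fun F :: "'b::ring_1 q4 \<Rightarrow> 'b q4 \<Rightarrow> 'b q4" where
  "F (Q p q r s) (Q x1 x2 x3 x4) = Q (p*x1) (p*x2 + q*x1) (r*x1 + p*x3) (r*x2 + s*x1 + p*x4 + q*x3)"

lemma g0_free[simp]: "g0 \<in> free_grp" by (simp add: g0_def)
lemma Phi_g0: "Phi (g0 :: (('b::ring_1 \<times> 'b) \<times> ('b \<times> 'b)) \<Rightarrow> int) = Q 1 0 0 0"
  by (simp add: g0_def Phi_gen ev_def h1_def h2_def h3_def h4_def)

lemma F_assoc: "F w (F z x) = F (F w z) x"
  by (cases w; cases z; cases x) (simp add: algebra_simps)
lemma F_one_l: "F (Q 1 0 0 0) x = x" by (cases x) simp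
lemma F_one_r: "F x (Q 1 0 0 0) = x" by (cases x) simp
lemma F_add: "F z (x + y) = F z x + F z y"
  by (cases z; cases x; cases y) (simp add: algebra_simps)
lemma F_rA: "F z (rA x a) = rA (F z x) a"
  by (cases z; cases x; cases a) (simp add: algebra_simps)
lemma F_lA:
  assumes c: "central p" "central q" "central r" "central s"
  shows "F (Q p q r s) (lA a x) = lA a (F (Q p q r s) x)"
proof -
  obtain a0 a1 where a: "a = (a0, a1)" by (cases a)
  obtain x1 x2 x3 x4 where x: "x = Q x1 x2 x3 x4" by (cases x)
  have cp: "p * a0 = a0 * p" "p * a1 = a1 * p" using c by (simp_all add: central_def)
  have cq: "q * a0 = a0 * q" "q * a1 = a1 * q" using c by (simp_all add: central_def)
  have cr: "r * a0 = a0 * r" "r * a1 = a1 * r" using c by (simp_all add: central_def)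
  have cs: "s * a0 = a0 * s" "s * a1 = a1 * s" using c by (simp_all add: central_def)
  show ?thesis
    by (simp add: a x distrib_left distrib_right mult.assoc[symmetric] cp cq cr cs add_ac)
qed

lemma decomp:
  assumes f: "f \<in> free_grp" and X: "Phi f = Q x1 x2 x3 x4"
  shows "Phi f = Phi (fadd (ract g0 (x1,x2)) (lact eps (ract g0 (x3,x4))))"
  by (simp add: X Phi_fadd Phi_lact Phi_ract Phi_g0 eps_def)

context
  fixes \<phi> :: "(('b::ring_1 \<times> 'b) \<times> ('b \<times> 'b) \<Rightarrow> int) \<Rightarrow> (('b \<times> 'b) \<times> ('b \<times> 'b) \<Rightarrow> int)"
  assumes E: "tensor_endo \<phi>"
begin

lemma E_free: "f \<in> free_grp \<Longrightarrow> \<phi> f \<in> free_grp"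
  using E unfolding tensor_endo_def by blast

lemma E_cong: "f \<in> free_grp \<Longrightarrow> g \<in> free_grp \<Longrightarrow> Phi f = Phi g \<Longrightarrow> Phi (\<phi> f) = Phi (\<phi> g)"
  using E unfolding tensor_endo_def by (metis E_free eqv_iff)

lemma E_add: "f \<in> free_grp \<Longrightarrow> g \<in> free_grp \<Longrightarrow> Phi (\<phi> (fadd f g)) = Phi (\<phi> f) + Phi (\<phi> g)"
proof -
  assume fg: "f \<in> free_grp" "g \<in> free_grp"
  then have "fsub (\<phi> (fadd f g)) (fadd (\<phi> f) (\<phi> g)) \<in> tensor_rel" using E unfolding tensor_endo_def by blast
  then show ?thesis using fg by (simp add: eqv_iff E_free Phi_fadd)
qed

lemma E_l: "f \<in> free_grp \<Longrightarrow> Phi (\<phi> (lact a f)) = lA a (Phi (\<phi> f))"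
proof -
  assume fg: "f \<in> free_grp"
  then have "fsub (\<phi> (lact a f)) (lact a (\<phi> f)) \<in> tensor_rel" using E unfolding tensor_endo_def by blast
  then show ?thesis using fg by (simp add: eqv_iff E_free Phi_lact)
qed

lemma E_r: "f \<in> free_grp \<Longrightarrow> Phi (\<phi> (ract f a)) = rA (Phi (\<phi> f)) a"
proof -
  assume fg: "f \<in> free_grp"
  then have "fsub (\<phi> (ract f a)) (ract (\<phi> f) a) \<in> tensor_rel" using E unfolding tensor_endo_def by blast
  then show ?thesis using fg by (simp add: eqv_iff E_free Phi_ract)
qed

lemma endo_Phi: assumes f: "f \<in> free_grp" shows "Phi (\<phi> f) = F (Phi (\<phi> g0)) (Phi f)"
proof -
  obtain x1 x2 x3 x4 where X: "Phi f = Q x1 x2 x3 x4" by (cases "Phi f")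
  obtain p q r s where Z: "Phi (\<phi> g0) = Q p q r s" by (cases "Phi (\<phi> g0)")
  let ?a = "ract g0 (x1,x2)" and ?b = "lact eps (ract g0 (x3,x4))"
  have "Phi (\<phi> f) = Phi (\<phi> (fadd ?a ?b))"
    by (rule E_cong) (use f decomp[OF f X] in simp_all)
  also have "\<dots> = Phi (\<phi> ?a) + Phi (\<phi> ?b)" by (simp add: E_add)
  also have "\<dots> = rA (Phi (\<phi> g0)) (x1,x2) + lA eps (rA (Phi (\<phi> g0)) (x3,x4))"
    by (simp add: E_l E_r)
  also have "\<dots> = F (Phi (\<phi> g0)) (Phi f)" by (simp add: Z X eps_def)
  finally show ?thesis .
qed

lemma endo_central:
  assumes Z: "Phi (\<phi> g0) = Q p q r s"
  shows "central p \<and> central q \<and> central r \<and> central s"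
proof -
  have "b * p = p * b \<and> b * q = q * b \<and> b * r = r * b \<and> b * s = s * b" for b
  proof -
    have "Phi (\<phi> (lact (b,0) g0)) = Phi (\<phi> (ract g0 (b,0)))"
      by (rule E_cong) (simp_all add: Phi_lact Phi_ract Phi_g0)
    then have "lA (b,0) (Q p q r s) = rA (Q p q r s) (b,0)" by (simp add: E_l E_r Z)
    then show ?thesis by simp
  qed
  then show ?thesis unfolding central_def by metis
qed

end




lemma F_addl: "F (z + w) x = F z x + F w x"
  by (cases z; cases w; cases x) (simp add: algebra_simps)

definition W :: "'b::ring_1 \<Rightarrow> 'b \<Rightarrow> 'b \<Rightarrow> 'b \<Rightarrow> 'b q4" where
  "W q r s i = (let w2 = - (i * q * i); w3 = - (i * r * i) in
     Q i w2 w3 (- (i * (r * w2 + s * i + q * w3))))"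
definition WL :: "'b::ring_1 \<Rightarrow> 'b \<Rightarrow> 'b \<Rightarrow> 'b \<Rightarrow> 'b q4" where
  "WL q r s i = (let w2 = - (i * q * i); w3 = - (i * r * i) in
     Q i w2 w3 (- ((w3 * q + i * s + w2 * r) * i)))"

lemma rinv: assumes pi: "p * i = 1" shows "F (Q p q r s) (W q r s i) = Q 1 0 0 0"
proof -
  have pi': "p * (i * x) = x" for x using pi by (simp add: mult.assoc[symmetric])
  show ?thesis using pi by (simp add: W_def Let_def algebra_simps pi')
qed

lemma linv: assumes ip: "i * p = 1" shows "F (WL q r s i) (Q p q r s) = Q 1 0 0 0"
proof -
  have ip': "x * i * p = x" for x using ip by (simp add: mult.assoc)
  have ip'': "x * (i * p) = x" for x using ip by simp
  show ?thesis using ip by (simp add: WL_def Let_def algebra_simps ip'')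
qed

lemma inv_eq: assumes "F z w = Q 1 0 0 0" "F wl z = Q 1 0 0 0" shows "wl = w"
proof -
  have "wl = F wl (F z w)" by (simp add: assms(1) F_one_r)
  also have "\<dots> = F (F wl z) w" by (rule F_assoc)
  also have "\<dots> = w" by (simp add: assms(2) F_one_l)
  finally show ?thesis .
qed

lemma W_central: assumes "central q" "central r" "central s" "central i"
  shows "\<exists>a b c d. W q r s i = Q a b c d \<and> central a \<and> central b \<and> central c \<and> central d"
  using assms by (simp add: W_def Let_def central_mult central_add central_uminus central_diff)

lemma power_central_mult: "central a \<Longrightarrow> (a * b) ^ n = a ^ n * b ^ n"
proof (induction n)
  case 0 then show ?case by simp
next
  case (Suc n)
  have "(a * b) ^ Suc n = a * b * (a ^ n * b ^ n)" using Suc by (simp add: power_Suc)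
  also have "\<dots> = a * (b * a ^ n) * b ^ n" by (simp add: mult.assoc)
  also have "\<dots> = a * (a ^ n * b) * b ^ n"
    using central_comm[OF central_power[OF Suc.prems], of n b] by simp
  also have "\<dots> = a ^ Suc n * b ^ Suc n" by (simp add: mult.assoc power_Suc power_Suc2)
  finally show ?case .
qed

lemma geom: fixes x :: "'b::ring_1" shows "(1 - x) * (\<Sum>k<n. x ^ k) = 1 - x ^ n \<and> (\<Sum>k<n. x ^ k) * (1 - x) = 1 - x ^ n"
proof (induction n)
  case 0 then show ?case by simp
next
  case (Suc n)
  let ?S = "\<Sum>k<n. x ^ k"
  have S: "(\<Sum>k<Suc n. x ^ k) = ?S + x ^ n" by simp
  have a: "(1 - x) * (?S + x ^ n) = (1 - x) * ?S + (x ^ n - x * x ^ n)"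
    by (simp add: distrib_left left_diff_distrib)
  have b: "(?S + x ^ n) * (1 - x) = ?S * (1 - x) + (x ^ n - x * x ^ n)"
    by (simp add: distrib_right right_diff_distrib power_commutes)
  show ?case unfolding S a b using Suc by (simp add: power_Suc)
qed

lemma nil_unit: fixes x :: "'b::ring_1" assumes "x ^ n = 0" shows "\<exists>y. (1 - x) * y = 1 \<and> y * (1 - x) = 1"
  using geom[of x n] assms by auto




lemma unit_p_gen:
  assumes S: "\<forall>f\<in>free_grp. \<sigma> f \<in> free_grp \<and> Phi (\<sigma> f) = F Z (Phi f)"
    and U: "endo_unit \<sigma>" and Z: "Z = Q p q r s"
  shows "\<exists>i. i * p = 1 \<and> p * i = 1"
proof -
  obtain \<chi> where E: "tensor_endo \<chi>" and l: "endo_eq (\<chi> \<circ> \<sigma>) id" and r: "endo_eq (\<sigma> \<circ> \<chi>) id"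
    using U unfolding endo_unit_def by blast
  obtain p' q' r' s' where Zc: "Phi (\<chi> g0) = Q p' q' r' s'" by (cases "Phi (\<chi> g0)")
  have sg: "\<sigma> g0 \<in> free_grp" using S by simp
  have cg: "\<chi> g0 \<in> free_grp" using E_free[OF E] by simp
  have "fsub (\<chi> (\<sigma> g0)) g0 \<in> tensor_rel" using l by (simp add: endo_eq_def)
  then have "Phi (\<chi> (\<sigma> g0)) = Phi g0" using eqv_iff[OF E_free[OF E sg] g0_free] by blast
  moreover have "Phi (\<chi> (\<sigma> g0)) = F (Phi (\<chi> g0)) (Phi (\<sigma> g0))" by (rule endo_Phi[OF E sg])
  moreover have "Phi (\<sigma> g0) = Z" using S by (simp add: Phi_g0 F_one_r)
  ultimately have 1: "F (Q p' q' r' s') (Q p q r s) = Q 1 0 0 0" using Zc Z by (simp add: Phi_g0)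
  have "fsub (\<sigma> (\<chi> g0)) g0 \<in> tensor_rel" using r by (simp add: endo_eq_def)
  moreover have "\<sigma> (\<chi> g0) \<in> free_grp" using S cg by blast
  ultimately have "Phi (\<sigma> (\<chi> g0)) = Phi g0" using eqv_iff[OF _ g0_free] by blast
  moreover have "Phi (\<sigma> (\<chi> g0)) = F Z (Phi (\<chi> g0))" using S cg by simp
  ultimately have 2: "F (Q p q r s) (Q p' q' r' s') = Q 1 0 0 0" using Zc Z by (simp add: Phi_g0)
  show ?thesis using 1 2 by auto
qed

lemma p_unit_imp:
  assumes E: "tensor_endo \<phi>" and Z: "Phi (\<phi> g0) = Q p q r s" and ip: "i * p = 1" and pi: "p * i = 1"
  shows "endo_unit \<phi>"
proof -
  have c: "central p" "central q" "central r" "central s" using endo_central[OF E Z] by auto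
  have ci: "central i" using central_inverse[OF c(1) ip pi] .
  obtain a b c' d where Wq: "W q r s i = Q a b c' d" and cw: "central a" "central b" "central c'" "central d"
    using W_central[OF c(2,3,4) ci] by blast
  let ?w = "W q r s i"
  have R: "F (Q p q r s) ?w = Q 1 0 0 0" by (rule rinv[OF pi])
  have L: "F ?w (Q p q r s) = Q 1 0 0 0"
    using linv[OF ip, of q r s] unfolding inv_eq[OF R linv[OF ip]] .
  define \<chi> where "\<chi> f = psi (F ?w (Phi f))" for f
  have P: "Phi (\<chi> f) = F ?w (Phi f)" for f by (simp add: \<chi>_def Phi_psi)
  have fr: "\<chi> f \<in> free_grp" for f by (simp add: \<chi>_def)
  have Ec: "tensor_endo \<chi>"
    unfolding tensor_endo_def
  proof (intro conjI ballI allI impI)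
    fix f :: "('a \<times> 'a) \<times> ('a \<times> 'a) \<Rightarrow> int" show "\<chi> f \<in> free_grp" by (rule fr)
  next
    fix f g :: "('a \<times> 'a) \<times> ('a \<times> 'a) \<Rightarrow> int" assume fg: "f \<in> free_grp" "g \<in> free_grp" "fsub f g \<in> tensor_rel"
    then have "Phi f = Phi g" using eqv_iff by blast
    then show "fsub (\<chi> f) (\<chi> g) \<in> tensor_rel" using eqv_iff fr P by metis
  next
    fix f g :: "('a \<times> 'a) \<times> ('a \<times> 'a) \<Rightarrow> int" assume fg: "f \<in> free_grp" "g \<in> free_grp"
    have "Phi (\<chi> (fadd f g)) = Phi (fadd (\<chi> f) (\<chi> g))"
      using fg by (simp add: P Phi_fadd fr F_add)
    then show "fsub (\<chi> (fadd f g)) (fadd (\<chi> f) (\<chi> g)) \<in> tensor_rel"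
      using eqv_iff[OF fr fadd_free[OF fr fr]] by blast
  next
    fix a and f :: "('a \<times> 'a) \<times> ('a \<times> 'a) \<Rightarrow> int" assume f: "f \<in> free_grp"
    have "Phi (\<chi> (lact a f)) = Phi (lact a (\<chi> f))"
      using f by (simp add: P Phi_lact fr Wq F_lA[OF cw])
    then show "fsub (\<chi> (lact a f)) (lact a (\<chi> f)) \<in> tensor_rel"
      using eqv_iff[OF fr lact_free[OF fr]] by blast
  next
    fix a and f :: "('a \<times> 'a) \<times> ('a \<times> 'a) \<Rightarrow> int" assume f: "f \<in> free_grp"
    have "Phi (\<chi> (ract f a)) = Phi (ract (\<chi> f) a)"
      using f by (simp add: P Phi_ract fr F_rA)
    then show "fsub (\<chi> (ract f a)) (ract (\<chi> f) a) \<in> tensor_rel"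
      using eqv_iff[OF fr ract_free[OF fr]] by blast
  qed
  have l: "endo_eq (\<chi> \<circ> \<phi>) id" unfolding endo_eq_def
  proof
    fix f :: "('a \<times> 'a) \<times> ('a \<times> 'a) \<Rightarrow> int" assume f: "f \<in> free_grp"
    have "Phi (\<chi> (\<phi> f)) = F ?w (F (Q p q r s) (Phi f))" using endo_Phi[OF E f] Z by (simp add: P)
    also have "\<dots> = Phi f" by (simp add: F_assoc L F_one_l)
    finally have "Phi (\<chi> (\<phi> f)) = Phi f" .
    then show "fsub ((\<chi> \<circ> \<phi>) f) (id f) \<in> tensor_rel" using eqv_iff[OF fr f] by simp
  qed
  have r: "endo_eq (\<phi> \<circ> \<chi>) id" unfolding endo_eq_def
  proof
    fix f :: "('a \<times> 'a) \<times> ('a \<times> 'a) \<Rightarrow> int" assume f: "f \<in> free_grp"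
    have "Phi (\<phi> (\<chi> f)) = F (Q p q r s) (F ?w (Phi f))" using endo_Phi[OF E fr] Z by (simp add: P)
    also have "\<dots> = Phi f" by (simp add: F_assoc R F_one_l)
    finally have "Phi (\<phi> (\<chi> f)) = Phi f" .
    then show "fsub ((\<phi> \<circ> \<chi>) f) (id f) \<in> tensor_rel" using eqv_iff[OF E_free[OF E fr] f] by simp
  qed
  show ?thesis unfolding endo_unit_def using Ec l r by blast
qed




lemma end_local:
  fixes sc :: "'k::field \<Rightarrow> 'b::ring_1 \<Rightarrow> 'b"
  assumes fd: "fin_dim_algebra sc" and conn: "connected_algebra TYPE('b)"
  shows "tensor_end_local TYPE('b)"
  unfolding tensor_end_local_def
proof (intro conjI allI impI)
  have n01: "(0::'b) \<noteq> 1" using conn by (simp add: connected_algebra_def)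
  show "\<not> endo_eq (id :: (('b \<times> 'b) \<times> ('b \<times> 'b) \<Rightarrow> int) \<Rightarrow> _) (\<lambda>f. (\<lambda>_. 0))"
  proof
    assume "endo_eq (id :: (('b \<times> 'b) \<times> ('b \<times> 'b) \<Rightarrow> int) \<Rightarrow> _) (\<lambda>f. (\<lambda>_. 0))"
    then have "fsub (g0 :: ('b \<times> 'b) \<times> ('b \<times> 'b) \<Rightarrow> int) (\<lambda>_. 0) \<in> tensor_rel"
      unfolding endo_eq_def by simp
    then have "Phi (g0 :: ('b \<times> 'b) \<times> ('b \<times> 'b) \<Rightarrow> int) = Phi (\<lambda>_. 0)"
      using eqv_iff[OF g0_free zero_free] by blast
    then show False using n01 by (simp add: Phi_g0 Phi_zero zero_Q)
  qed
next
  fix \<phi> \<psi> :: "(('b \<times> 'b) \<times> ('b \<times> 'b) \<Rightarrow> int) \<Rightarrow> (('b \<times> 'b) \<times> ('b \<times> 'b) \<Rightarrow> int)"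
  assume H: "tensor_endo \<phi> \<and> tensor_endo \<psi> \<and> \<not> endo_unit \<phi> \<and> \<not> endo_unit \<psi>"
  then have E1: "tensor_endo \<phi>" and E2: "tensor_endo \<psi>" and N1: "\<not> endo_unit \<phi>" and N2: "\<not> endo_unit \<psi>"
    by auto
  obtain p1 q1 r1 s1 where Z1: "Phi (\<phi> g0) = Q p1 q1 r1 s1" by (cases "Phi (\<phi> g0)")
  obtain p2 q2 r2 s2 where Z2: "Phi (\<psi> g0) = Q p2 q2 r2 s2" by (cases "Phi (\<psi> g0)")
  have c1: "central p1" using endo_central[OF E1 Z1] by auto
  have c2: "central p2" using endo_central[OF E2 Z2] by auto
  have nu1: "\<not> (\<exists>i. i * p1 = 1 \<and> p1 * i = 1)" using p_unit_imp[OF E1 Z1] N1 by blast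
  have nu2: "\<not> (\<exists>i. i * p2 = 1 \<and> p2 * i = 1)" using p_unit_imp[OF E2 Z2] N2 by blast
  have "\<exists>n. p1 ^ n = 0"
  proof (cases "\<exists>y. p1 * y = 1 \<and> y * p1 = 1")
    case True then have False using nu1 by auto
    then show ?thesis ..
  next
    case False then show ?thesis using fitting[OF fd conn c1] by auto
  qed
  then obtain n where nil: "p1 ^ n = 0" ..
  show "\<not> endo_unit (\<lambda>f. fadd (\<phi> f) (\<psi> f))"
  proof
    assume U: "endo_unit (\<lambda>f. fadd (\<phi> f) (\<psi> f))"
    have S: "\<forall>f\<in>free_grp. (\<lambda>f. fadd (\<phi> f) (\<psi> f)) f \<in> free_grp \<and>
        Phi ((\<lambda>f. fadd (\<phi> f) (\<psi> f)) f) = F (Phi (\<phi> g0) + Phi (\<psi> g0)) (Phi f)"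
    proof
      fix f :: "('b \<times> 'b) \<times> ('b \<times> 'b) \<Rightarrow> int" assume f: "f \<in> free_grp"
      have a: "Phi (\<phi> f) = F (Phi (\<phi> g0)) (Phi f)" by (rule endo_Phi[OF E1 f])
      have b: "Phi (\<psi> f) = F (Phi (\<psi> g0)) (Phi f)" by (rule endo_Phi[OF E2 f])
      show "(\<lambda>f. fadd (\<phi> f) (\<psi> f)) f \<in> free_grp \<and>
        Phi ((\<lambda>f. fadd (\<phi> f) (\<psi> f)) f) = F (Phi (\<phi> g0) + Phi (\<psi> g0)) (Phi f)"
        using f E_free[OF E1 f] E_free[OF E2 f] by (simp only: Phi_fadd a b F_addl fadd_free simp_thms)
    qed
    obtain c where cu: "c * (p1 + p2) = 1" "(p1 + p2) * c = 1"
      using unit_p_gen[OF S U] Z1 Z2 by auto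
    have cc: "central c" using central_inverse[OF central_add[OF c1 c2] cu] .
    have "(c * p1) ^ n = 0" using power_central_mult[OF cc] nil by simp
    then obtain y where y: "(1 - c * p1) * y = 1" "y * (1 - c * p1) = 1" using nil_unit by blast
    have e: "1 - c * p1 = c * p2" using cu(1) by (simp add: distrib_left algebra_simps)
    have "(y * c) * p2 = 1" using y(2) e by (simp add: mult.assoc)
    moreover have "p2 * (c * y) = 1" using y(1) e central_comm[OF cc, of p2] by (simp add: mult.assoc[symmetric])
    ultimately show False using nu2 by (metis mult.assoc mult_1_left)
  qed
qed

lemma sub_fsub: "tensor_submod U \<Longrightarrow> f \<in> U \<Longrightarrow> g \<in> U \<Longrightarrow> fsub f g \<in> U"
proof -
  assume U: "tensor_submod U" "f \<in> U" "g \<in> U"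
  then have "fadd f (\<lambda>q. - g q) \<in> U" unfolding tensor_submod_def by blast
  moreover have "fadd f (\<lambda>q. - g q) = fsub f g" by (simp add: fun_eq_iff fadd_def fsub_def)
  ultimately show ?thesis by simp
qed

lemma sub_central:
  assumes U: "tensor_submod U" and V: "tensor_submod V" and I: "U \<inter> V = tensor_rel"
    and u: "u \<in> U" and v: "v \<in> V" and S: "Phi u + Phi v = Q 1 0 0 0"
    and Pu: "Phi u = Q p q r s"
  shows "central p \<and> central q \<and> central r \<and> central s"
proof -
  have uf: "u \<in> free_grp" and vf: "v \<in> free_grp" using U V u v unfolding tensor_submod_def by auto
  obtain p' q' r' s' where Pv: "Phi v = Q p' q' r' s'" by (cases "Phi v")
  have sums: "p + p' = 1" "q + q' = 0" "r + r' = 0" "s + s' = 0" using S Pu Pv by auto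
  have "b * p = p * b \<and> b * q = q * b \<and> b * r = r * b \<and> b * s = s * b" for b
  proof -
    let ?du = "fsub (lact (b,0) u) (ract u (b,0))"
    let ?dv = "fsub (lact (b,0) v) (ract v (b,0))"
    have du: "?du \<in> U" using U u by (intro sub_fsub) (auto simp: tensor_submod_def)
    have dv: "?dv \<in> V" using V v by (intro sub_fsub) (auto simp: tensor_submod_def)
    have duf: "?du \<in> free_grp" and dvf: "?dv \<in> free_grp" using uf vf by auto
    have p': "p' = 1 - p" "q' = - q" "r' = - r" "s' = - s" using sums by (simp_all add: eq_neg_iff_add_eq_0 algebra_simps)
    have "Phi (fsub ?du (\<lambda>q. - ?dv q)) = 0"
      using duf dvf uf vf by (simp add: Phi_fsub Phi_neg Phi_lact Phi_ract Pu Pv p' zero_Q algebra_simps)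
    then have "fsub ?du (\<lambda>q. - ?dv q) \<in> tensor_rel" by (rule kernel[OF fsub_free[OF duf neg_free[OF dvf]]])
    then have "fsub ?du (\<lambda>q. - ?dv q) \<in> V" using V unfolding tensor_submod_def by blast
    moreover have "(\<lambda>q. - ?dv q) \<in> V" using V dv unfolding tensor_submod_def by blast
    ultimately have "fadd (fsub ?du (\<lambda>q. - ?dv q)) (\<lambda>q. - ?dv q) \<in> V" using V unfolding tensor_submod_def by blast
    moreover have "fadd (fsub ?du (\<lambda>q. - ?dv q)) (\<lambda>q. - ?dv q) = ?du" by (simp add: fun_eq_iff fadd_def fsub_def)
    ultimately have "?du \<in> V" by simp
    then have "?du \<in> tensor_rel" using du I by blast
    then have "Phi ?du = 0" by (rule Phi_rel)
    then show ?thesis using uf by (simp add: Phi_fsub Phi_lact Phi_ract Pu zero_Q)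
  qed
  then show ?thesis unfolding central_def by metis
qed

lemma sub_all:
  assumes U: "tensor_submod U" and u: "u \<in> U" and Pu: "Phi u = Q p q r s" and pi: "p * i = 1"
  shows "free_grp \<subseteq> U"
proof -
  have uf: "u \<in> free_grp" using U u unfolding tensor_submod_def by auto
  have cl: "\<And>f g. f \<in> U \<Longrightarrow> g \<in> U \<Longrightarrow> fadd f g \<in> U"
    and la: "\<And>a f. f \<in> U \<Longrightarrow> lact a f \<in> U" and ra: "\<And>a f. f \<in> U \<Longrightarrow> ract f a \<in> U"
    and rl: "tensor_rel \<subseteq> U"
    using U unfolding tensor_submod_def by auto
  obtain w1 w2 w3 w4 where Wq: "W q r s i = Q w1 w2 w3 w4" by (cases "W q r s i")
  let ?h = "fadd (ract u (w1,w2)) (lact eps (ract u (w3,w4)))"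
  have hU: "?h \<in> U" using u by (intro cl la ra)
  have "Phi ?h = F (Q p q r s) (Q w1 w2 w3 w4)"
    using uf by (simp add: Phi_fadd Phi_lact Phi_ract Pu eps_def)
  also have "\<dots> = Q 1 0 0 0" using rinv[OF pi, of q r s] Wq by simp
  finally have "Phi ?h = Phi g0" by (simp add: Phi_g0)
  moreover have hf: "?h \<in> free_grp" using uf by simp
  ultimately have "fsub g0 ?h \<in> tensor_rel" using eqv_iff[OF g0_free hf] by simp
  then have "fadd ?h (fsub g0 ?h) \<in> U" using hU rl cl by blast
  moreover have "fadd ?h (fsub g0 ?h) = g0" by (simp add: fun_eq_iff fadd_def fsub_def)
  ultimately have g0U: "g0 \<in> U" by simp
  show ?thesis
  proof
    fix f :: "('a \<times> 'a) \<times> ('a \<times> 'a) \<Rightarrow> int" assume f: "f \<in> free_grp"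
    obtain x1 x2 x3 x4 where X: "Phi f = Q x1 x2 x3 x4" by (cases "Phi f")
    let ?G = "fadd (ract g0 (x1,x2)) (lact eps (ract g0 (x3,x4)))"
    have GU: "?G \<in> U" using g0U by (intro cl la ra)
    have Gf: "?G \<in> free_grp" by simp
    have "fsub f ?G \<in> tensor_rel" using eqv_iff[OF f Gf] decomp[OF f X] by simp
    then have "fadd ?G (fsub f ?G) \<in> U" using GU rl cl by blast
    moreover have "fadd ?G (fsub f ?G) = f" by (simp add: fun_eq_iff fadd_def fsub_def)
    ultimately show "f \<in> U" by simp
  qed
qed




lemma indec:
  fixes sc :: "'k::field \<Rightarrow> 'b::ring_1 \<Rightarrow> 'b"
  assumes fd: "fin_dim_algebra sc" and conn: "connected_algebra TYPE('b)"
  shows "tensor_indecomposable TYPE('b)"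
  unfolding tensor_indecomposable_def
proof (intro conjI allI impI)
  have n01: "(0::'b) \<noteq> 1" using conn by (simp add: connected_algebra_def)
  have "(g0 :: ('b \<times> 'b) \<times> ('b \<times> 'b) \<Rightarrow> int) \<notin> tensor_rel"
  proof
    assume "(g0 :: ('b \<times> 'b) \<times> ('b \<times> 'b) \<Rightarrow> int) \<in> tensor_rel"
    then have "Phi (g0 :: ('b \<times> 'b) \<times> ('b \<times> 'b) \<Rightarrow> int) = 0" by (rule Phi_rel)
    then show False using n01 by (simp add: Phi_g0 zero_Q)
  qed
  then show "\<exists>f\<in>(free_grp :: ((('b \<times> 'b) \<times> ('b \<times> 'b)) \<Rightarrow> int) set). f \<notin> tensor_rel"
    using g0_free by blast
next
  fix U V :: "((('b \<times> 'b) \<times> ('b \<times> 'b)) \<Rightarrow> int) set"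
  assume H: "tensor_submod U \<and> tensor_submod V \<and> U \<inter> V = tensor_rel \<and>
        (\<forall>f\<in>free_grp. \<exists>u\<in>U. \<exists>v\<in>V. fsub (fsub f u) v \<in> tensor_rel)"
  then have U: "tensor_submod U" and V: "tensor_submod V" and I: "U \<inter> V = tensor_rel"
    and sp: "\<forall>f\<in>free_grp. \<exists>u\<in>U. \<exists>v\<in>V. fsub (fsub f u) v \<in> tensor_rel" by auto
  obtain u v where u: "u \<in> U" and v: "v \<in> V" and r: "fsub (fsub g0 u) v \<in> tensor_rel"
    using sp g0_free by blast
  have uf: "u \<in> free_grp" and vf: "v \<in> free_grp" using U V u v unfolding tensor_submod_def by auto
  have "Phi (fsub (fsub g0 u) v) = 0" using r by (rule Phi_rel)
  then have z: "Phi g0 - Phi u - Phi v = 0" using uf vf by (simp add: Phi_fsub)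
  have "Phi u + Phi v = Phi g0 - (Phi g0 - Phi u - Phi v)" by (simp add: algebra_simps)
  also have "\<dots> = Phi g0" unfolding z by simp
  finally have S: "Phi u + Phi v = Q 1 0 0 0" by (simp only: Phi_g0)
  obtain p q r s where Pu: "Phi u = Q p q r s" by (cases "Phi u")
  obtain p' q' r' s' where Pv: "Phi v = Q p' q' r' s'" by (cases "Phi v")
  have cp: "central p" using sub_central[OF U V I u v S Pu] by auto
  have sum: "p + p' = 1" using S Pu Pv by simp
  have p': "p' = 1 - p" using sum by (simp add: algebra_simps)
  show "U = tensor_rel \<or> V = tensor_rel"
  proof (cases "\<exists>y. p * y = 1 \<and> y * p = 1")
    case True
    then obtain y where "p * y = 1" by blast
    then have "free_grp \<subseteq> U" by (rule sub_all[OF U u Pu])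
    moreover have "V \<subseteq> free_grp" using V unfolding tensor_submod_def by auto
    ultimately have "V = U \<inter> V" by blast
    then show ?thesis using I by simp
  next
    case False
    then obtain n where "p ^ n = 0" using fitting[OF fd conn cp] by blast
    then obtain y where "(1 - p) * y = 1" using nil_unit by blast
    then have "p' * y = 1" using p' by simp
    then have "free_grp \<subseteq> V" by (rule sub_all[OF V v Pv])
    moreover have "U \<subseteq> free_grp" using U unfolding tensor_submod_def by auto
    ultimately have "U = U \<inter> V" by blast
    then show ?thesis using I by simp
  qed
qed

theorem lemma55:
  fixes sc :: "'k::field \<Rightarrow> 'b::ring_1 \<Rightarrow> 'b"
  assumes "alg_closed_field TYPE('k)"
    and "fin_dim_algebra sc"
    and "symmetric_algebra sc"
    and "connected_algebra TYPE('b)"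
  shows "tensor_indecomposable TYPE('b) \<and> tensor_end_local TYPE('b)"
  using indec[OF assms(2,4)] end_local[OF assms(2,4)] by blast


end
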